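(* Let $A\in\mathbb{R}^{n\times n}$ be symmetric with smallest eigenvalue $\alpha_n$, $g\in\mathbb{R}^n$ nonzero, $\Delta>0$, and let $x_{opt}$ be a global minimizer of $\frac12x^TAx+x^Tg$ subject to $\|x\|\le\Delta$ with Lagrange multiplier $\lambda_{opt}\ge0$ (i.e. $(A+\lambda_{opt}I)x_{opt}=-g$, $\lambda_{opt}(\Delta-\|x_{opt}\|)=0$, $A+\lambda_{opt}I\succeq0$). Suppose $\|x_{opt}\|=\Delta$. Let $$M=\begin{pmatrix}-A&\frac{gg^T}{\Delta^2}\\ I&-A\end{pmatrix}\in\mathbb{R}^{2n\times2n}.$$ Then the TRS is in the easy case, i.e. $\lambda_{opt}>-\alpha_n$, if and only if $\lambda_{opt}$ is a simple eigenvalue of $M$.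
   Context: Norms are Euclidean. By standard theory either $\lambda_{opt}>-\alpha_n$ (easy case) or $\lambda_{opt}=-\alpha_n$ (hard case, in which $g\perp\mathcal{N}(A-\alpha_nI)$). *)

theory Defs
  imports "Jordan_Normal_Form.Jordan_Normal_Form"
begin

definition vnorm :: "real vec \<Rightarrow> real" where
  "vnorm v = sqrt (v \<bullet> v)"

definition trs_obj :: "real mat \<Rightarrow> real vec \<Rightarrow> real vec \<Rightarrow> real" where
  "trs_obj A g x = (1/2) * (x \<bullet> (A *\<^sub>v x)) + x \<bullet> g"

definition psd :: "nat \<Rightarrow> real mat \<Rightarrow> bool" where
  "psd n B \<longleftrightarrow> (\<forall>v \<in> carrier_vec n. 0 \<le> v \<bullet> (B *\<^sub>v v))"

definition outer :: "nat \<Rightarrow> real vec \<Rightarrow> real mat" where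
  "outer n g = mat n n (\<lambda>(i, j). g $ i * g $ j)"

definition Mmat :: "nat \<Rightarrow> real mat \<Rightarrow> real vec \<Rightarrow> real \<Rightarrow> real mat" where
  "Mmat n A g \<Delta> = four_block_mat (- A) ((1 / \<Delta>\<^sup>2) \<cdot>\<^sub>m outer n g) (1\<^sub>m n) (- A)"

definition simple_eigenvalue :: "real mat \<Rightarrow> real \<Rightarrow> bool" where
  "simple_eigenvalue M l \<longleftrightarrow> eigenvalue M l \<and> order l (char_poly M) = 1"

end

theory Submission
  imports Defs
begin

abbreviation cm :: "real mat \<Rightarrow> real poly mat" where "cm \<equiv> map_mat (\<lambda>a. [:a:])"
abbreviation cv :: "real vec \<Rightarrow> real poly vec" where "cv \<equiv> map_vec (\<lambda>a. [:a:])"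

definition Bpm :: "nat \<Rightarrow> real mat \<Rightarrow> real poly mat" where
  "Bpm n A = [:0,1:] \<cdot>\<^sub>m 1\<^sub>m n + cm A"

lemma cst_hom: "comm_ring_hom (\<lambda>a::'a::comm_ring_1. [:a:])"
  by unfold_locales (auto simp: one_pCons)

interpretation cst: comm_ring_hom "\<lambda>a::real. [:a:]" by (rule cst_hom)

lemma Bpm_carrier[simp]: "A \<in> carrier_mat n n \<Longrightarrow> Bpm n A \<in> carrier_mat n n"
  by (auto simp: Bpm_def)

lemma Bpm_shift: assumes A: "A \<in> carrier_mat n n"
  shows "Bpm n A = cm (A + lam \<cdot>\<^sub>m 1\<^sub>m n) + [:-lam,1:] \<cdot>\<^sub>m 1\<^sub>m n"
  by (rule eq_matI) (use A in \<open>auto simp: Bpm_def\<close>)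

lemma charpoly_M: assumes A: "A \<in> carrier_mat n n"
  shows "char_poly (Mmat n A g \<Delta>) = det (Bpm n A * Bpm n A - cm ((1 / \<Delta>\<^sup>2) \<cdot>\<^sub>m outer n g))"
proof -
  define G where "G = (1 / \<Delta>\<^sup>2) \<cdot>\<^sub>m outer n g"
  have G: "G \<in> carrier_mat n n" unfolding G_def outer_def by simp
  have B: "Bpm n A \<in> carrier_mat n n" using A by simp
  have Mm: "Mmat n A g \<Delta> = four_block_mat (- A) G (1\<^sub>m n) (- A)" by (simp add: Mmat_def G_def)
  have "char_poly_matrix (Mmat n A g \<Delta>) = four_block_mat (Bpm n A) (- cm G) (- 1\<^sub>m n) (Bpm n A)"
    by (rule eq_matI) (use A G in \<open>auto simp: char_poly_matrix_def Mm Bpm_def\<close>)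
  then have "char_poly (Mmat n A g \<Delta>) = det (four_block_mat (Bpm n A) (- cm G) (- 1\<^sub>m n) (Bpm n A))"
    unfolding char_poly_def by simp
  also have "\<dots> = det (Bpm n A * Bpm n A - (- cm G) * (- 1\<^sub>m n))"
    by (rule det_four_block_mat) (use G B in auto)
  also have "(- cm G) * (- 1\<^sub>m n) = cm G" using G by auto
  finally show ?thesis unfolding G_def .
qed
definition colm :: "nat \<Rightarrow> 'a vec \<Rightarrow> 'a mat" where "colm n u = mat n 1 (\<lambda>(i,_). u $ i)"
definition rowm :: "nat \<Rightarrow> 'a vec \<Rightarrow> 'a mat" where "rowm n u = mat 1 n (\<lambda>(_,j). u $ j)"

lemma colm_carrier[simp]: "colm n u \<in> carrier_mat n 1" by (simp add: colm_def)
lemma rowm_carrier[simp]: "rowm n u \<in> carrier_mat 1 n" by (simp add: rowm_def)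

lemma colm_rowm: fixes u v :: "'a::comm_ring_1 vec"
  shows "colm n u * rowm n v = mat n n (\<lambda>(i,j). u$i * v$j)"
  by (rule eq_matI) (auto simp: colm_def rowm_def scalar_prod_def)

lemma det_1x1: "B \<in> carrier_mat 1 1 \<Longrightarrow> det B = B $$ (0,0)"
  by (subst det_upper_triangular[of _ 1]) (auto simp: upper_triangular_def diag_mat_def)

lemma mdl:
  fixes W :: "'a::idom mat"
  assumes W: "W \<in> carrier_mat n n" and u: "u \<in> carrier_vec n" and v: "v \<in> carrier_vec n"
    and d: "det W \<noteq> 0"
  shows "det (W + mat n n (\<lambda>(i,j). u$i * v$j)) = det W + v \<bullet> (adj_mat W *\<^sub>v u)"
proof -
  define cu where "cu = colm n u"
  define rv where "rv = rowm n v"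
  define d where "d = det W"
  define aW where "aW = adj_mat W"
  have cu: "cu \<in> carrier_mat n 1" and rv: "rv \<in> carrier_mat 1 n" unfolding cu_def rv_def colm_def rowm_def by auto
  have aW: "aW \<in> carrier_mat n n" "aW * W = d \<cdot>\<^sub>m 1\<^sub>m n" using adj_mat[OF W] unfolding aW_def d_def by auto
  have outer: "mat n n (\<lambda>(i,j). u$i * v$j) = cu * rv" unfolding cu_def rv_def colm_rowm ..
  define M1 where "M1 = four_block_mat W cu (- rv) (1\<^sub>m 1)"
  define M2 where "M2 = four_block_mat (1\<^sub>m n) (0\<^sub>m n 1) rv (1\<^sub>m 1)"
  define L where "L = four_block_mat aW (0\<^sub>m n 1) (rv * aW) (d \<cdot>\<^sub>m 1\<^sub>m 1)"
  have M1c: "M1 \<in> carrier_mat (n+1) (n+1)" unfolding M1_def using W cu rv by auto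
  have M2c: "M2 \<in> carrier_mat (n+1) (n+1)" unfolding M2_def using rv by auto
  have Lc: "L \<in> carrier_mat (n+1) (n+1)" unfolding L_def using aW rv by auto
  have "M1 * M2 = four_block_mat (W * 1\<^sub>m n + cu * rv) (W * 0\<^sub>m n 1 + cu * 1\<^sub>m 1)
      (- rv * 1\<^sub>m n + 1\<^sub>m 1 * rv) (- rv * 0\<^sub>m n 1 + 1\<^sub>m 1 * 1\<^sub>m 1)"
    unfolding M1_def M2_def by (rule mult_four_block_mat) (use W cu rv in auto)
  also have "\<dots> = four_block_mat (W + cu * rv) cu (0\<^sub>m 1 n) (1\<^sub>m 1)"
    using W cu rv by (auto intro!: cong_four_block_mat)
  finally have M12: "M1 * M2 = \<dots>" .
  have "det (M1 * M2) = det (W + cu * rv)"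
    unfolding M12 by (subst det_four_block_mat_lower_left_zero[of _ n _ 1]) (use W cu rv in auto)
  moreover have "det M2 = 1"
    unfolding M2_def by (subst det_four_block_mat_upper_right_zero[of _ n _ 1]) (use rv in auto)
  ultimately have dM1: "det M1 = det (W + cu * rv)" using det_mult[OF M1c M2c] by simp
  have "L * M1 = four_block_mat (aW * W + 0\<^sub>m n 1 * (- rv)) (aW * cu + 0\<^sub>m n 1 * 1\<^sub>m 1)
      (rv * aW * W + (d \<cdot>\<^sub>m 1\<^sub>m 1) * (- rv)) (rv * aW * cu + (d \<cdot>\<^sub>m 1\<^sub>m 1) * 1\<^sub>m 1)"
    unfolding M1_def L_def by (rule mult_four_block_mat) (use W cu rv aW in auto)
  also have "\<dots> = four_block_mat (d \<cdot>\<^sub>m 1\<^sub>m n) (aW * cu) (0\<^sub>m 1 n) (rv * aW * cu + d \<cdot>\<^sub>m 1\<^sub>m 1)"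
  proof (rule cong_four_block_mat)
    show "aW * W + 0\<^sub>m n 1 * - rv = d \<cdot>\<^sub>m 1\<^sub>m n" using aW rv by auto
    show "aW * cu + 0\<^sub>m n 1 * 1\<^sub>m 1 = aW * cu" using aW cu by auto
    have "rv * aW * W = rv * (aW * W)" using rv aW W by (auto simp: assoc_mult_mat)
    also have "\<dots> = d \<cdot>\<^sub>m rv" using rv aW by auto
    finally show "rv * aW * W + d \<cdot>\<^sub>m 1\<^sub>m 1 * - rv = 0\<^sub>m 1 n" using rv
      by (auto simp: eq_matI)
    show "rv * aW * cu + d \<cdot>\<^sub>m 1\<^sub>m 1 * 1\<^sub>m 1 = rv * aW * cu + d \<cdot>\<^sub>m 1\<^sub>m 1" using rv by auto
  qed
  finally have LM1: "L * M1 = \<dots>" .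
  have Z: "rv * aW * cu + d \<cdot>\<^sub>m 1\<^sub>m 1 \<in> carrier_mat 1 1" using rv aW cu by auto
  have "det (L * M1) = d ^ n * det (rv * aW * cu + d \<cdot>\<^sub>m 1\<^sub>m 1)"
    unfolding LM1 by (subst det_four_block_mat_lower_left_zero[of _ n _ 1]) (use aW cu Z in auto)
  also have "det (rv * aW * cu + d \<cdot>\<^sub>m 1\<^sub>m 1) = (rv * aW * cu) $$ (0,0) + d"
    using det_1x1[OF Z] rv aW cu by auto
  also have "(rv * aW * cu) $$ (0,0) = v \<bullet> (aW *\<^sub>v u)"
    using rv aW cu u v unfolding rv_def cu_def rowm_def colm_def
    apply (auto simp: scalar_prod_def mult_mat_vec_def sum_distrib_left sum_distrib_right)
    apply (subst sum.swap) apply (auto intro!: sum.cong simp: ac_simps)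
    done
  finally have dLM1: "det (L * M1) = d ^ n * (v \<bullet> (aW *\<^sub>v u) + d)" .
  have "det L = det aW * d"
    unfolding L_def by (subst det_four_block_mat_upper_right_zero[of _ n _ 1]) (use aW rv in auto)
  also have "det aW * d = det (aW * W)" using det_mult[OF aW(1) W] unfolding d_def by simp
  also have "\<dots> = d ^ n" unfolding aW(2) by (simp add: det_smult)
  finally have "d ^ n * det M1 = d ^ n * (v \<bullet> (aW *\<^sub>v u) + d)"
    using det_mult[OF Lc M1c] dLM1 by (metis mult.commute)
  then have "det M1 = v \<bullet> (aW *\<^sub>v u) + d" using d unfolding d_def by simp
  then show ?thesis unfolding outer dM1[symmetric] d_def aW_def by simp
qed
lemma smult_mat_vec: assumes "B \<in> carrier_mat n n" "v \<in> carrier_vec n"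
  shows "(a \<cdot>\<^sub>m B) *\<^sub>v v = a \<cdot>\<^sub>v (B *\<^sub>v v)"
  by (rule eq_vecI) (use assms in \<open>auto simp: scalar_prod_def sum_distrib_left ac_simps\<close>)

lemma mat_vec_smult: fixes B :: "'a::comm_ring_1 mat"
  assumes "B \<in> carrier_mat n m" "v \<in> carrier_vec m"
  shows "B *\<^sub>v (a \<cdot>\<^sub>v v) = a \<cdot>\<^sub>v (B *\<^sub>v v)"
  by (rule eq_vecI) (use assms in \<open>auto simp: scalar_prod_def sum_distrib_left ac_simps\<close>)

lemma hard_dvd:
  fixes A G :: "real mat"
  assumes A: "A \<in> carrier_mat n n" and k: "k \<in> carrier_vec n" "k \<noteq> 0\<^sub>v n"
    and Bk: "(A + lam \<cdot>\<^sub>m 1\<^sub>m n) *\<^sub>v k = 0\<^sub>v n" and G: "G \<in> carrier_mat n n"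
    and Gk: "G *\<^sub>v k = 0\<^sub>v n"
  shows "[:-lam,1:]^2 dvd det (Bpm n A * Bpm n A - cm G)"
proof -
  define S where "S = [:-lam,1:]"
  define B0 where "B0 = A + lam \<cdot>\<^sub>m 1\<^sub>m n"
  define kp where "kp = cv k"
  define Bp where "Bp = Bpm n A"
  define N where "N = Bp * Bp - cm G"
  have B0: "B0 \<in> carrier_mat n n" using A unfolding B0_def by auto
  have Bp: "Bp \<in> carrier_mat n n" using A unfolding Bp_def by auto
  have kp: "kp \<in> carrier_vec n" using k unfolding kp_def by auto
  have N: "N \<in> carrier_mat n n" using Bp G unfolding N_def by auto
  have "cm B0 *\<^sub>v kp = cv (B0 *\<^sub>v k)" unfolding kp_def using cst.mult_mat_vec_hom[OF B0 k(1)] by simp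
  also have "\<dots> = 0\<^sub>v n" using Bk unfolding B0_def by (simp add: cst.vec_hom_zero)
  finally have B0k: "cm B0 *\<^sub>v kp = 0\<^sub>v n" .
  have Bpk: "Bp *\<^sub>v kp = S \<cdot>\<^sub>v kp"
    unfolding Bp_def Bpm_shift[OF A, of lam] B0_def[symmetric] S_def[symmetric]
    using B0k B0 kp by (simp add: add_mult_distrib_mat_vec[of _ n n] smult_mat_vec[of _ n])
  have "cm G *\<^sub>v kp = cv (G *\<^sub>v k)" unfolding kp_def using cst.mult_mat_vec_hom[OF G k(1)] by simp
  also have "\<dots> = 0\<^sub>v n" using Gk by (simp add: cst.vec_hom_zero)
  finally have Gkp: "cm G *\<^sub>v kp = 0\<^sub>v n" .
  have Nk: "N *\<^sub>v kp = (S * S) \<cdot>\<^sub>v kp"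
  proof -
    have "N *\<^sub>v kp = Bp *\<^sub>v (Bp *\<^sub>v kp) - cm G *\<^sub>v kp"
      unfolding N_def using Bp G kp
      by (simp add: minus_mult_distrib_mat_vec[of _ n n] assoc_mult_mat_vec[of _ n n])
    also have "\<dots> = Bp *\<^sub>v (S \<cdot>\<^sub>v kp)" using Bpk Gkp kp Bp
      by (intro eq_vecI) auto
    also have "\<dots> = S \<cdot>\<^sub>v (S \<cdot>\<^sub>v kp)" using Bp kp Bpk by (simp add: mat_vec_smult[of Bp n n kp])
    also have "\<dots> = (S * S) \<cdot>\<^sub>v kp" by (simp add: smult_smult_assoc)
    finally show ?thesis .
  qed
  have "(adj_mat N * N) *\<^sub>v kp = det N \<cdot>\<^sub>v kp"
    using adj_mat[OF N] kp by (simp add: smult_mat_vec[of _ n])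
  moreover have "(adj_mat N * N) *\<^sub>v kp = (S * S) \<cdot>\<^sub>v (adj_mat N *\<^sub>v kp)"
  proof -
    have "(adj_mat N * N) *\<^sub>v kp = adj_mat N *\<^sub>v (N *\<^sub>v kp)"
      by (rule assoc_mult_mat_vec) (use adj_mat[OF N] N kp in auto)
    then show ?thesis using adj_mat[OF N] kp Nk by (simp add: mat_vec_smult[of _ n n])
  qed
  ultimately have eq: "det N \<cdot>\<^sub>v kp = (S * S) \<cdot>\<^sub>v (adj_mat N *\<^sub>v kp)" by simp
  from k obtain j where j: "j < n" "k $ j \<noteq> 0" by (auto simp: vec_eq_iff)
  have "det N * [:k $ j:] = S * S * (adj_mat N *\<^sub>v kp) $ j"
    using arg_cong[OF eq, of "\<lambda>v. v $ j"] j kp adj_mat[OF N] unfolding kp_def by simp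
  then have "det N = S^2 * ((adj_mat N *\<^sub>v kp) $ j * [:1 / k $ j:])"
  proof -
    assume h: "det N * [:k $ j:] = S * S * (adj_mat N *\<^sub>v kp) $ j"
    have "det N = det N * [:k $ j:] * [:1 / k $ j:]" using j
      by (simp add: mult.assoc flip: cst.hom_mult)
    also have "\<dots> = S^2 * ((adj_mat N *\<^sub>v kp) $ j * [:1 / k $ j:])" unfolding h
      by (simp add: power2_eq_square ac_simps)
    finally show ?thesis .
  qed
  then show ?thesis unfolding N_def Bp_def S_def by (metis dvd_triv_left)
qed
lemma hom_scalar_prod: assumes h: "comm_ring_hom h" and v: "v \<in> carrier_vec n" and w: "w \<in> carrier_vec n"
  shows "h (v \<bullet> w) = map_vec h v \<bullet> map_vec h w"
proof -
  interpret h: comm_ring_hom h by (rule h)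
  show ?thesis using v w by (simp add: scalar_prod_def h.hom_sum h.hom_mult)
qed

lemma adj_hom: assumes h: "comm_ring_hom h" and A: "A \<in> carrier_mat n n"
  shows "map_mat h (adj_mat A) = adj_mat (map_mat h A)"
proof -
  interpret h: comm_ring_hom h by (rule h)
  have md: "map_mat h (mat_delete A i j) = mat_delete (map_mat h A) i j" if "i < n" "j < n" for i j
    by (rule eq_matI) (use A that in \<open>auto simp: mat_delete_def\<close>)
  show ?thesis
    by (rule eq_matI) (use A in \<open>auto simp: adj_mat_def cofactor_def h.hom_mult h.hom_power
        h.hom_uminus md[symmetric] h.hom_det\<close>)
qed

lemma adj_one: "adj_mat (1\<^sub>m n :: 'a::comm_ring_1 mat) = 1\<^sub>m n"
proof -
  have "1\<^sub>m n * adj_mat (1\<^sub>m n :: 'a mat) = det (1\<^sub>m n :: 'a mat) \<cdot>\<^sub>m 1\<^sub>m n"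
    using adj_mat[of "1\<^sub>m n :: 'a mat" n] by auto
  moreover have "(1::'a) \<cdot>\<^sub>m 1\<^sub>m n = 1\<^sub>m n" by (rule eq_matI) auto
  ultimately show ?thesis using adj_mat[of "1\<^sub>m n :: 'a mat" n] by simp
qed

lemma ev_cm: "map_mat (\<lambda>p. poly p a) (cm M) = M"
  by (rule eq_matI) auto
lemma ev_cv: "map_vec (\<lambda>p. poly p a) (cv v) = v"
  by (rule eq_vecI) auto

lemma colm_mult: fixes B :: "'a::comm_ring_1 mat"
  assumes "B \<in> carrier_mat n n" "x \<in> carrier_vec n"
  shows "B * colm n x = colm n (B *\<^sub>v x)"
  by (rule eq_matI) (use assms in \<open>auto simp: colm_def scalar_prod_def\<close>)

lemma rowm_mult: fixes B :: "'a::comm_ring_1 mat"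
  assumes "B \<in> carrier_mat n n" "x \<in> carrier_vec n" "transpose_mat B = B"
  shows "rowm n x * B = rowm n (B *\<^sub>v x)"
proof (rule eq_matI)
  fix i j assume ij: "i < dim_row (rowm n (B *\<^sub>v x))" "j < dim_col (rowm n (B *\<^sub>v x))"
  have "B $$ (k, j) = B $$ (j, k)" if "k < n" for k
    using arg_cong[OF assms(3), of "\<lambda>M. M $$ (j, k)"] assms(1) that ij by (auto simp: rowm_def)
  then show "(rowm n x * B) $$ (i, j) = rowm n (B *\<^sub>v x) $$ (i, j)"
    using assms ij by (auto simp: rowm_def scalar_prod_def ac_simps intro!: sum.cong)
qed (use assms in \<open>auto simp: rowm_def\<close>)

lemma easy_factor:
  fixes A E :: "real mat" and x g :: "real vec" and c lam :: real
  assumes A: "A \<in> carrier_mat n n" and E: "E \<in> carrier_mat n n"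
    and BE: "(A + lam \<cdot>\<^sub>m 1\<^sub>m n) * E = 1\<^sub>m n" and EB: "E * (A + lam \<cdot>\<^sub>m 1\<^sub>m n) = 1\<^sub>m n"
    and sym: "transpose_mat (A + lam \<cdot>\<^sub>m 1\<^sub>m n) = A + lam \<cdot>\<^sub>m 1\<^sub>m n"
    and x: "x \<in> carrier_vec n" and g: "g \<in> carrier_vec n"
    and kkt: "(A + lam \<cdot>\<^sub>m 1\<^sub>m n) *\<^sub>v x = - g"
    and cx: "c * (x \<bullet> x) = 1"
  shows "\<exists>q. det (Bpm n A * Bpm n A - cm (c \<cdot>\<^sub>m outer n g)) = [:-lam,1:] * q
     \<and> poly q lam = 2 * c * (det (A + lam \<cdot>\<^sub>m 1\<^sub>m n))^2 * (x \<bullet> (E *\<^sub>v x))"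
proof -
  define S where "S = [:-lam,1:]"
  define B0 where "B0 = A + lam \<cdot>\<^sub>m 1\<^sub>m n"
  define Bp where "Bp = Bpm n A"
  define cB where "cB = cm B0"
  define cE where "cE = cm E"
  define U where "U = 1\<^sub>m n + S \<cdot>\<^sub>m cE"
  define xp where "xp = cv x"
  define Xc where "Xc = cm (c \<cdot>\<^sub>m outer n x)"
  have B0: "B0 \<in> carrier_mat n n" using A unfolding B0_def by auto
  have cB: "cB \<in> carrier_mat n n" using B0 unfolding cB_def by auto
  have cE: "cE \<in> carrier_mat n n" using E unfolding cE_def by auto
  have U: "U \<in> carrier_mat n n" using cE unfolding U_def by auto
  have xp: "xp \<in> carrier_vec n" using x unfolding xp_def by auto
  have Xc: "Xc \<in> carrier_mat n n" unfolding Xc_def outer_def by auto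
  have Bp: "Bp = cB + S \<cdot>\<^sub>m 1\<^sub>m n" unfolding Bp_def cB_def B0_def S_def by (rule Bpm_shift[OF A])
  have cBE: "cB * cE = 1\<^sub>m n"
    unfolding cB_def cE_def using cst.mat_hom_mult[OF B0 E, symmetric] BE
    unfolding B0_def by (simp add: cst.mat_hom_one)
  have cEB: "cE * cB = 1\<^sub>m n"
    unfolding cB_def cE_def using cst.mat_hom_mult[OF E B0, symmetric] EB
    unfolding B0_def by (simp add: cst.mat_hom_one)
  have BU: "cB * U = Bp"
  proof -
    have "cB * U = cB * 1\<^sub>m n + cB * (S \<cdot>\<^sub>m cE)" unfolding U_def
      by (rule mult_add_distrib_mat) (use cB cE in auto)
    also have "cB * (S \<cdot>\<^sub>m cE) = S \<cdot>\<^sub>m (cB * cE)" by (rule mult_smult_distrib) (use cB cE in auto)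
    finally show ?thesis unfolding Bp cBE using cB by simp
  qed
  have UB: "U * cB = Bp"
  proof -
    have "U * cB = 1\<^sub>m n * cB + (S \<cdot>\<^sub>m cE) * cB" unfolding U_def
      by (rule add_mult_distrib_mat) (use cB cE in auto)
    also have "(S \<cdot>\<^sub>m cE) * cB = S \<cdot>\<^sub>m (cE * cB)" by (rule mult_smult_assoc_mat) (use cB cE in auto)
    finally show ?thesis unfolding Bp cEB using cB by simp
  qed
  have og: "outer n g = B0 * outer n x * B0"
  proof -
    have "B0 * outer n x * B0 = B0 * (colm n x * rowm n x) * B0"
      unfolding outer_def colm_rowm ..
    also have "\<dots> = (B0 * colm n x) * (rowm n x * B0)"
    proof -
      have c1: "colm n x \<in> carrier_mat n 1" "rowm n x \<in> carrier_mat 1 n" by (auto simp: colm_def rowm_def)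
      have "B0 * (colm n x * rowm n x) = (B0 * colm n x) * rowm n x"
        using assoc_mult_mat[OF B0 c1] by simp
      moreover have "(B0 * colm n x) * rowm n x * B0 = (B0 * colm n x) * (rowm n x * B0)"
        by (rule assoc_mult_mat) (use B0 c1 in auto)
      ultimately show ?thesis by simp
    qed
    also have "\<dots> = colm n (- g) * rowm n (- g)"
      using colm_mult[OF B0 x] rowm_mult[OF B0 x sym[folded B0_def]] kkt unfolding B0_def by simp
    also have "\<dots> = outer n g" unfolding colm_rowm outer_def using g by (auto intro!: eq_matI)
    finally show ?thesis by simp
  qed
  have cG: "cm (c \<cdot>\<^sub>m outer n g) = cB * Xc * cB"
  proof -
    have "c \<cdot>\<^sub>m outer n g = B0 * (c \<cdot>\<^sub>m outer n x) * B0"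
    proof -
      have O: "outer n x \<in> carrier_mat n n" by (simp add: outer_def)
      have "B0 * (c \<cdot>\<^sub>m outer n x) = c \<cdot>\<^sub>m (B0 * outer n x)" by (rule mult_smult_distrib[OF B0 O])
      moreover have "(c \<cdot>\<^sub>m (B0 * outer n x)) * B0 = c \<cdot>\<^sub>m (B0 * outer n x * B0)"
        by (rule mult_smult_assoc_mat) (use B0 O in auto)
      ultimately show ?thesis unfolding og by simp
    qed
    moreover have O: "c \<cdot>\<^sub>m outer n x \<in> carrier_mat n n" by (simp add: outer_def)
    moreover have "cm (B0 * (c \<cdot>\<^sub>m outer n x) * B0) = cm (B0 * (c \<cdot>\<^sub>m outer n x)) * cm B0"
      by (rule cst.mat_hom_mult[OF mult_carrier_mat[OF B0 O] B0])
    moreover have "cm (B0 * (c \<cdot>\<^sub>m outer n x)) = cm B0 * cm (c \<cdot>\<^sub>m outer n x)"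
      by (rule cst.mat_hom_mult[OF B0 O])
    ultimately show ?thesis unfolding cB_def Xc_def by metis
  qed
  define W where "W = U * U"
  have W: "W \<in> carrier_mat n n" using U unfolding W_def by auto
  have N: "Bp * Bp - cm (c \<cdot>\<^sub>m outer n g) = cB * (W - Xc) * cB"
  proof -
    have "Bp * Bp = cB * W * cB" unfolding W_def using BU UB cB U
      by (metis assoc_mult_mat mult_carrier_mat)
    then show ?thesis unfolding cG using cB W Xc
      by (simp add: mult_minus_distrib_mat[of _ n n] minus_mult_distrib_mat[of _ n n])
  qed
  have detN: "det (Bp * Bp - cm (c \<cdot>\<^sub>m outer n g)) = [:det B0:]^2 * det (W - Xc)"
  proof -
    have WX: "W - Xc \<in> carrier_mat n n" using W Xc by auto
    have "det (cB * (W - Xc) * cB) = det (cB * (W - Xc)) * det cB"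
      by (rule det_mult[OF mult_carrier_mat[OF cB WX] cB])
    also have "det (cB * (W - Xc)) = det cB * det (W - Xc)" by (rule det_mult[OF cB WX])
    also have "det cB = [:det B0:]" unfolding cB_def by (rule cst.hom_det)
    finally show ?thesis unfolding N by (simp add: power2_eq_square ac_simps)
  qed
  define ev where "ev = (\<lambda>p::real poly. poly p lam)"
  interpret evh: comm_ring_hom ev unfolding ev_def by (rule poly_hom.comm_ring_hom_axioms)
  have evU: "map_mat ev U = 1\<^sub>m n"
    by (rule eq_matI) (use E in \<open>auto simp: U_def ev_def S_def cE_def carrier_matD[OF E]\<close>)
  have evW: "map_mat ev W = 1\<^sub>m n"
    unfolding W_def using evh.mat_hom_mult[OF U U] evU by simp
  have detW: "det W \<noteq> 0"
  proof
    assume "det W = 0"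
    then have "ev (det W) = 0" unfolding ev_def by simp
    moreover have "ev (det W) = 1" unfolding evh.hom_det[symmetric]
      using evW by simp
    ultimately show False by simp
  qed
  define u where "u = [:-c:] \<cdot>\<^sub>v xp"
  have u: "u \<in> carrier_vec n" using xp unfolding u_def by auto
  have WX: "W - Xc = W + mat n n (\<lambda>(i,j). u$i * xp$j)"
    by (rule eq_matI) (use W x in \<open>auto simp: Xc_def u_def xp_def outer_def\<close>)
  define aW where "aW = adj_mat W"
  have aW: "aW \<in> carrier_mat n n" "aW * W = det W \<cdot>\<^sub>m 1\<^sub>m n" using adj_mat[OF W] unfolding aW_def by auto
  have mdl': "det (W - Xc) = det W + xp \<bullet> (aW *\<^sub>v u)"
    unfolding WX aW_def by (rule mdl[OF W u xp detW])
  define r where "r = cE *\<^sub>v xp + cE *\<^sub>v (U *\<^sub>v xp)"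
  have r: "r \<in> carrier_vec n" using cE U xp unfolding r_def by auto
  have Uv: "U *\<^sub>v y = y + S \<cdot>\<^sub>v (cE *\<^sub>v y)" if "y \<in> carrier_vec n" for y
    unfolding U_def using that cE by (simp add: add_mult_distrib_mat_vec[of _ n n] smult_mat_vec[of _ n])
  have Wx: "W *\<^sub>v xp = xp + S \<cdot>\<^sub>v r"
  proof -
    have "W *\<^sub>v xp = U *\<^sub>v (U *\<^sub>v xp)" unfolding W_def using U xp by (simp add: assoc_mult_mat_vec[of _ n n])
    also have "\<dots> = (U *\<^sub>v xp) + S \<cdot>\<^sub>v (cE *\<^sub>v (U *\<^sub>v xp))" by (rule Uv) (use U xp in auto)
    also have "\<dots> = xp + S \<cdot>\<^sub>v r" unfolding Uv[OF xp] r_def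
      by (rule eq_vecI) (use xp cE U in \<open>auto simp: algebra_simps\<close>)
    finally show ?thesis .
  qed
  have xx: "xp \<bullet> xp = [:x \<bullet> x:]" unfolding xp_def using hom_scalar_prod[OF cst_hom x x] by simp
  have "det W + xp \<bullet> (aW *\<^sub>v u) = S * ([:c:] * (xp \<bullet> (aW *\<^sub>v r)))"
  proof -
    have dW: "det W = [:c:] * (xp \<bullet> (aW *\<^sub>v (W *\<^sub>v xp)))"
    proof -
      have "aW *\<^sub>v (W *\<^sub>v xp) = det W \<cdot>\<^sub>v xp"
        using aW W xp by (simp add: assoc_mult_mat_vec[of _ n n, symmetric] smult_mat_vec[of _ n])
      then have "xp \<bullet> (aW *\<^sub>v (W *\<^sub>v xp)) = det W * [:x \<bullet> x:]"
        using xp xx by (simp add: scalar_prod_smult_right)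
      then show ?thesis using cx by (simp add: ac_simps flip: cst.hom_mult)
    qed
    have du: "xp \<bullet> (aW *\<^sub>v u) = - ([:c:] * (xp \<bullet> (aW *\<^sub>v xp)))"
      unfolding u_def using aW xp by (simp add: mat_vec_smult[of _ n n] scalar_prod_smult_right)
    have "aW *\<^sub>v (W *\<^sub>v xp) = aW *\<^sub>v xp + S \<cdot>\<^sub>v (aW *\<^sub>v r)"
      unfolding Wx using aW xp r by (simp add: mult_add_distrib_mat_vec[of _ n n] mat_vec_smult[of _ n n])
    then have "xp \<bullet> (aW *\<^sub>v (W *\<^sub>v xp)) = xp \<bullet> (aW *\<^sub>v xp) + S * (xp \<bullet> (aW *\<^sub>v r))"
      using aW xp r by (simp add: scalar_prod_add_distrib[of _ n] scalar_prod_smult_right)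
    then show ?thesis unfolding dW du by (simp add: algebra_simps)
  qed
  define q where "q = [:det B0:]^2 * ([:c:] * (xp \<bullet> (aW *\<^sub>v r)))"
  have fact1: "det (Bp * Bp - cm (c \<cdot>\<^sub>m outer n g)) = S * q"
    unfolding detN mdl' q_def using \<open>det W + xp \<bullet> (aW *\<^sub>v u) = _\<close> by (simp add: ac_simps)
  have evaW: "map_mat ev aW = 1\<^sub>m n"
    unfolding aW_def using adj_hom[OF evh.comm_ring_hom_axioms W] evW adj_one by simp
  have evxp: "map_vec ev xp = x" unfolding xp_def ev_def by (rule ev_cv)
  have evcE: "map_mat ev cE = E" unfolding cE_def ev_def by (rule ev_cm)
  have evU': "map_vec ev (U *\<^sub>v xp) = x"
    using evh.mult_mat_vec_hom[OF U xp] evU evxp x by simp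
  have evr: "map_vec ev r = E *\<^sub>v x + E *\<^sub>v x"
  proof -
    have "map_vec ev r = map_vec ev (cE *\<^sub>v xp) + map_vec ev (cE *\<^sub>v (U *\<^sub>v xp))"
      by (rule eq_vecI) (use cE xp U in \<open>auto simp: r_def evh.hom_add\<close>)
    also have "map_vec ev (cE *\<^sub>v xp) = E *\<^sub>v x"
      using evh.mult_mat_vec_hom[OF cE xp] evcE evxp by simp
    also have "map_vec ev (cE *\<^sub>v (U *\<^sub>v xp)) = E *\<^sub>v x"
      using evh.mult_mat_vec_hom[OF cE, of "U *\<^sub>v xp"] U xp evcE evU' by simp
    finally show ?thesis .
  qed
  have "ev (xp \<bullet> (aW *\<^sub>v r)) = x \<bullet> (E *\<^sub>v x + E *\<^sub>v x)"
    using hom_scalar_prod[OF evh.comm_ring_hom_axioms xp, of "aW *\<^sub>v r"] aW r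
      evh.mult_mat_vec_hom[OF aW(1) r] evaW evr evxp E x by simp
  also have "\<dots> = 2 * (x \<bullet> (E *\<^sub>v x))" using E x by (simp add: scalar_prod_add_distrib[of _ n])
  finally have "poly q lam = 2 * c * (det B0)^2 * (x \<bullet> (E *\<^sub>v x))"
    unfolding q_def ev_def by simp
  then show ?thesis using fact1 unfolding S_def Bp_def B0_def by blast
qed

lemma real_sq_ge0: "0 \<le> (v::real vec) \<bullet> v"
  unfolding scalar_prod_def by (auto intro: sum_nonneg)

lemma real_sq_eq0: assumes "v \<in> carrier_vec n" "(v::real vec) \<bullet> v = 0" shows "v = 0\<^sub>v n"
proof (rule eq_vecI)
  fix i assume i: "i < dim_vec (0\<^sub>v n)"
  have "(\<Sum>j\<in>{0..<n}. v $ j * v $ j) = 0" using assms by (simp add: scalar_prod_def)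
  then have "\<forall>j\<in>{0..<n}. v $ j * v $ j = 0" by (subst sum_nonneg_eq_0_iff[symmetric]) auto
  then show "v $ i = 0\<^sub>v n $ i" using i by auto
qed (use assms in auto)

lemma posdef:
  fixes B :: "real mat"
  assumes B: "B \<in> carrier_mat n n" and sym: "transpose_mat B = B"
    and psd: "\<forall>v \<in> carrier_vec n. 0 \<le> v \<bullet> (B *\<^sub>v v)"
    and inj: "\<forall>v \<in> carrier_vec n. B *\<^sub>v v = 0\<^sub>v n \<longrightarrow> v = 0\<^sub>v n"
    and y: "y \<in> carrier_vec n" "y \<noteq> 0\<^sub>v n"
  shows "y \<bullet> (B *\<^sub>v y) > 0"
proof (rule ccontr)
  assume "\<not> ?thesis"
  with psd y have y0: "y \<bullet> (B *\<^sub>v y) = 0" by force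
  define z where "z = B *\<^sub>v y"
  have z: "z \<in> carrier_vec n" using B y unfolding z_def by auto
  have "z \<noteq> 0\<^sub>v n" using inj y unfolding z_def by auto
  then have a: "z \<bullet> z > 0" using real_sq_ge0[of z] real_sq_eq0[OF z] by force
  define a where "a = z \<bullet> z"
  define b where "b = z \<bullet> (B *\<^sub>v z)"
  have b: "b \<ge> 0" using psd z unfolding b_def by auto
  have yBz: "y \<bullet> (B *\<^sub>v z) = a"
  proof -
    have "y \<bullet> (B *\<^sub>v z) = (transpose_mat B *\<^sub>v y) \<bullet> z"
      using transpose_vec_mult_scalar[OF B z y(1)] by simp
    then show ?thesis unfolding sym a_def z_def .
  qed
  have zBy: "z \<bullet> (B *\<^sub>v y) = a" unfolding a_def z_def ..
  define t where "t = - a / (b + 1)"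
  define w where "w = y + t \<cdot>\<^sub>v z"
  have w: "w \<in> carrier_vec n" using y z unfolding w_def by auto
  have Bw: "B *\<^sub>v w = B *\<^sub>v y + t \<cdot>\<^sub>v (B *\<^sub>v z)"
    unfolding w_def using B y z by (simp add: mult_add_distrib_mat_vec mult_mat_vec)
  have "w \<bullet> (B *\<^sub>v w) = y \<bullet> (B *\<^sub>v y) + t * (y \<bullet> (B *\<^sub>v z)) + t * (z \<bullet> (B *\<^sub>v y)) + t * t * b"
    unfolding Bw unfolding w_def b_def using B y z
    by (simp add: scalar_prod_add_distrib[of _ n] add_scalar_prod_distrib[of _ n] algebra_simps)
  also have "\<dots> = t * (2 * a + t * b)" unfolding y0 yBz zBy by (simp add: algebra_simps)
  finally have eq: "w \<bullet> (B *\<^sub>v w) = t * (2 * a + t * b)" .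
  have "2 * a + t * b = a * (b + 2) / (b + 1)" unfolding t_def using b by (simp add: field_simps)
  moreover have "a * (b + 2) / (b + 1) > 0" using a b unfolding a_def by simp
  moreover have "t < 0" unfolding t_def using a b unfolding a_def by simp
  ultimately have "w \<bullet> (B *\<^sub>v w) < 0" unfolding eq by (metis mult_neg_pos)
  with psd w show False by force
qed

theorem theorem4p2:
  fixes n :: nat and A :: "real mat" and g x_opt :: "real vec"
    and \<alpha> \<Delta> lam :: real
  assumes A: "A \<in> carrier_mat n n" and sym: "A\<^sup>T = A"
    and alpha_ev: "eigenvalue A \<alpha>"
    and alpha_min: "\<forall>a. eigenvalue A a \<longrightarrow> \<alpha> \<le> a"
    and g: "g \<in> carrier_vec n" and g_nz: "g \<noteq> 0\<^sub>v n"
    and Delta: "\<Delta> > 0"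
    and x: "x_opt \<in> carrier_vec n" and x_feas: "vnorm x_opt \<le> \<Delta>"
    and x_min: "\<forall>y \<in> carrier_vec n. vnorm y \<le> \<Delta> \<longrightarrow> trs_obj A g x_opt \<le> trs_obj A g y"
    and lam_nonneg: "lam \<ge> 0"
    and kkt1: "(A + lam \<cdot>\<^sub>m 1\<^sub>m n) *\<^sub>v x_opt = - g"
    and kkt2: "lam * (\<Delta> - vnorm x_opt) = 0"
    and kkt3: "psd n (A + lam \<cdot>\<^sub>m 1\<^sub>m n)"
    and bd: "vnorm x_opt = \<Delta>"
  shows "lam > - \<alpha> \<longleftrightarrow> simple_eigenvalue (Mmat n A g \<Delta>) lam"
proof -
  define B0 where "B0 = A + lam \<cdot>\<^sub>m 1\<^sub>m n"
  define c where "c = 1 / \<Delta>\<^sup>2"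
  define M where "M = Mmat n A g \<Delta>"
  define f where "f = char_poly M"
  define S where "S = [:-lam, 1:]"
  have B0: "B0 \<in> carrier_mat n n" using A unfolding B0_def by auto
  have Asym: "A $$ (j, i) = A $$ (i, j)" if "i < n" "j < n" for i j
    using arg_cong[OF sym, of "\<lambda>M. M $$ (i, j)"] A that by auto
  have symB: "transpose_mat B0 = B0"
    by (rule eq_matI) (use A Asym in \<open>auto simp: B0_def\<close>)
  have Mc: "M \<in> carrier_mat (n+n) (n+n)" unfolding M_def Mmat_def outer_def using A by auto
  have f0: "f \<noteq> 0" using degree_monic_char_poly[OF Mc] unfolding f_def by auto
  have fdet: "f = det (Bpm n A * Bpm n A - cm (c \<cdot>\<^sub>m outer n g))"
    unfolding f_def M_def c_def by (rule charpoly_M[OF A])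
  have B0v: "B0 *\<^sub>v v = A *\<^sub>v v + lam \<cdot>\<^sub>v v" if "v \<in> carrier_vec n" for v
    unfolding B0_def using that A by (simp add: add_mult_distrib_mat_vec[of _ n n] smult_mat_vec[of _ n])
  obtain k where k: "k \<in> carrier_vec n" "k \<noteq> 0\<^sub>v n" "A *\<^sub>v k = \<alpha> \<cdot>\<^sub>v k"
    using alpha_ev A unfolding eigenvalue_def eigenvector_def by auto
  have Bk: "B0 *\<^sub>v k = (\<alpha> + lam) \<cdot>\<^sub>v k" using B0v[OF k(1)] k by (auto simp: add_smult_distrib_vec)
  have kk: "k \<bullet> k > 0" using real_sq_ge0[of k] real_sq_eq0[OF k(1)] k(2) by force
  have "0 \<le> k \<bullet> (B0 *\<^sub>v k)" using kkt3 k unfolding psd_def B0_def by auto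
  also have "k \<bullet> (B0 *\<^sub>v k) = (\<alpha> + lam) * (k \<bullet> k)" unfolding Bk using k by (simp add: scalar_prod_smult_right)
  finally have lam_ge: "lam \<ge> - \<alpha>" using kk by (simp add: zero_le_mult_iff)
  have xx: "c * (x_opt \<bullet> x_opt) = 1"
  proof -
    have "sqrt (x_opt \<bullet> x_opt) = \<Delta>" using bd unfolding vnorm_def .
    then have "x_opt \<bullet> x_opt = \<Delta>^2" using real_sq_ge0[of x_opt] by (metis real_sqrt_pow2)
    then show ?thesis unfolding c_def using Delta by simp
  qed
  show ?thesis
  proof
    assume easy: "lam > - \<alpha>"
    have inj: "\<forall>v \<in> carrier_vec n. B0 *\<^sub>v v = 0\<^sub>v n \<longrightarrow> v = 0\<^sub>v n"
    proof (intro ballI impI)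
      fix v assume v: "v \<in> carrier_vec n" and Bv: "B0 *\<^sub>v v = 0\<^sub>v n"
      show "v = 0\<^sub>v n"
      proof (rule ccontr)
        assume nz: "v \<noteq> 0\<^sub>v n"
        have "A *\<^sub>v v = (- lam) \<cdot>\<^sub>v v"
          using B0v[OF v] Bv v A by (intro eq_vecI) (auto simp: vec_eq_iff)
        then have "eigenvalue A (- lam)" using v nz A unfolding eigenvalue_def eigenvector_def by auto
        then show False using alpha_min easy by force
      qed
    qed
    have dB: "det B0 \<noteq> 0" using det_0_iff_vec_prod_zero[OF B0] inj by auto
    define E where "E = (1 / det B0) \<cdot>\<^sub>m adj_mat B0"
    have E: "E \<in> carrier_mat n n" using adj_mat[OF B0] unfolding E_def by auto
    have BE: "B0 * E = 1\<^sub>m n"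
    proof -
      have "B0 * E = (1 / det B0) \<cdot>\<^sub>m (B0 * adj_mat B0)" unfolding E_def
        by (rule mult_smult_distrib[OF B0]) (use adj_mat[OF B0] in auto)
      also have "\<dots> = 1\<^sub>m n" using adj_mat[OF B0] dB by (auto intro!: eq_matI)
      finally show ?thesis .
    qed
    have EB: "E * B0 = 1\<^sub>m n"
    proof -
      have "E * B0 = (1 / det B0) \<cdot>\<^sub>m (adj_mat B0 * B0)" unfolding E_def
        by (rule mult_smult_assoc_mat) (use adj_mat[OF B0] B0 in auto)
      also have "\<dots> = 1\<^sub>m n" using adj_mat[OF B0] dB by (auto intro!: eq_matI)
      finally show ?thesis .
    qed
    obtain q where q: "f = S * q" and pq: "poly q lam = 2 * c * (det B0)^2 * (x_opt \<bullet> (E *\<^sub>v x_opt))"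
      using easy_factor[OF A E BE[unfolded B0_def] EB[unfolded B0_def] symB[unfolded B0_def] x g
          kkt1 xx] unfolding fdet S_def B0_def by blast
    have "x_opt \<bullet> (E *\<^sub>v x_opt) > 0"
    proof -
      define y where "y = E *\<^sub>v x_opt"
      have y: "y \<in> carrier_vec n" using E x unfolding y_def by auto
      have By: "B0 *\<^sub>v y = x_opt" unfolding y_def using B0 E x BE
        by (simp add: assoc_mult_mat_vec[of _ n n, symmetric])
      have xnz: "x_opt \<noteq> 0\<^sub>v n" using xx by auto
      have ynz: "y \<noteq> 0\<^sub>v n" using By xnz B0 by auto
      have "y \<bullet> (B0 *\<^sub>v y) > 0"
        by (rule posdef[OF B0 symB _ inj y ynz]) (use kkt3 in \<open>simp add: psd_def B0_def\<close>)
      moreover have "x_opt \<bullet> y = y \<bullet> (B0 *\<^sub>v y)"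
        using comm_scalar_prod[OF y, of "B0 *\<^sub>v y"] B0 y By by auto
      ultimately show ?thesis unfolding y_def by simp
    qed
    then have pq0: "poly q lam \<noteq> 0" unfolding pq c_def using dB Delta by simp
    have "order lam f = order lam S + order lam q" unfolding q by (rule order_mult) (use f0 q in simp)
    also have "order lam S = 1" unfolding S_def using order_linear[of lam] by simp
    also have "order lam q = 0" using pq0 by (rule order_0I)
    finally have o1: "order lam f = 1" by simp
    have "poly f lam = 0" unfolding q S_def by simp
    then have "eigenvalue M lam" using eigenvalue_root_char_poly[OF Mc] unfolding f_def by simp
    then show "simple_eigenvalue (Mmat n A g \<Delta>) lam"
      using o1 unfolding simple_eigenvalue_def M_def f_def by simp
  next
    assume simp_ev: "simple_eigenvalue (Mmat n A g \<Delta>) lam"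
    show "lam > - \<alpha>"
    proof (rule ccontr)
      assume "\<not> lam > - \<alpha>"
      then have la: "lam = - \<alpha>" using lam_ge by simp
      have Bk0: "B0 *\<^sub>v k = 0\<^sub>v n" using Bk la k by auto
      have gk: "g \<bullet> k = 0"
      proof -
        have "g = - (B0 *\<^sub>v x_opt)" using kkt1 unfolding B0_def by simp
        then have "g \<bullet> k = - ((B0 *\<^sub>v x_opt) \<bullet> k)" using B0 x k by simp
        also have "(B0 *\<^sub>v x_opt) \<bullet> k = x_opt \<bullet> (B0 *\<^sub>v k)"
          using transpose_vec_mult_scalar[OF B0 k(1) x] unfolding symB .
        finally show ?thesis using Bk0 x by simp
      qed
      have Gk: "(c \<cdot>\<^sub>m outer n g) *\<^sub>v k = 0\<^sub>v n"
      proof (rule eq_vecI)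
        fix i assume i: "i < dim_vec (0\<^sub>v n)"
        have "((c \<cdot>\<^sub>m outer n g) *\<^sub>v k) $ i = c * g $ i * (g \<bullet> k)"
          using i k g by (auto simp: outer_def scalar_prod_def sum_distrib_left ac_simps intro!: sum.cong)
        then show "((c \<cdot>\<^sub>m outer n g) *\<^sub>v k) $ i = 0\<^sub>v n $ i" using gk i by simp
      qed (simp add: outer_def)
      have "S^2 dvd f" unfolding fdet S_def
        by (rule hard_dvd[OF A k(1) k(2) Bk0[unfolded B0_def]]) (use Gk in \<open>auto simp: outer_def\<close>)
      then have "2 \<le> order lam f" using order_divides[of lam 2 f] f0 unfolding S_def by simp
      then show False using simp_ev unfolding simple_eigenvalue_def M_def f_def by simp
    qed
  qed
qed

end
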